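(* For every $M>0$, no deterministic algorithm can achieve a competitive ratio better than $\frac{1}{M}$ for online Submodular Welfare in the adversarial setting with general (not necessarily monotone) non-negative submodular utilities.
   Context: A set function $f:2^{\mathcal N}\to\mathbb R_{\ge 0}$ is submodular if $f(A\cup B)+f(A\cap B)\le f(A)+f(B)$ for all $A,B\subseteq\mathcal N$. Online Submodular Welfare: there are $n$ bidders, bidder $j$ having a non-negative submodular (not necessarily monotone) utility $f_j$ over a set $\mathcal N$ of items that arrive one by one. When an item arrives, the algorithm must immediately and irrevocably assign it to one bidder or discard it; the goal is to maximize $\sum_j f_j(S_j)$, where $S_j$ is the set of items assigned to bidder $j$ (pairwise disjoint). Utilities are accessed via value oracles, and upon an item's arrival the algorithm may only query sets of items that already arrived. In the adversarial setting an adversary chooses the arrival order (and, since only queries on arrived items are possible, the instance may depend on the algorithm's earlier decisions). An algorithm has competitive ratio $\alpha$ if on every instance its value is at least $\alpha$ times the optimal offline value. *)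

theory Defs
  imports Complex_Main "HOL-Library.FuncSet"
begin

(* Items are identified with their arrival index 0,1,...,m-1.
   A valuation profile f gives bidder j the utility f j :: nat set => real. *)

definition submodular_on :: "nat set \<Rightarrow> (nat set \<Rightarrow> real) \<Rightarrow> bool" where
  "submodular_on N g \<longleftrightarrow>
     (\<forall>A B. A \<subseteq> N \<longrightarrow> B \<subseteq> N \<longrightarrow> g (A \<union> B) + g (A \<inter> B) \<le> g A + g B)"

definition nonneg_on :: "nat set \<Rightarrow> (nat set \<Rightarrow> real) \<Rightarrow> bool" where
  "nonneg_on N g \<longleftrightarrow> (\<forall>A. A \<subseteq> N \<longrightarrow> 0 \<le> g A)"

definition valid_instance :: "nat \<Rightarrow> nat \<Rightarrow> (nat \<Rightarrow> nat set \<Rightarrow> real) \<Rightarrow> bool" where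
  "valid_instance n m f \<longleftrightarrow>
     (\<forall>j<n. submodular_on {..<m} (f j) \<and> nonneg_on {..<m} (f j))"

(* An assignment maps each item to Some bidder or None (discarded). *)
definition welfare :: "nat \<Rightarrow> nat \<Rightarrow> (nat \<Rightarrow> nat set \<Rightarrow> real) \<Rightarrow> (nat \<Rightarrow> nat option) \<Rightarrow> real" where
  "welfare n m f a = (\<Sum>j<n. f j {i. i < m \<and> a i = Some j})"

definition assignments :: "nat \<Rightarrow> nat \<Rightarrow> (nat \<Rightarrow> nat option) set" where
  "assignments n m = {..<m} \<rightarrow>\<^sub>E insert None (Some ` {..<n})"

definition opt_welfare :: "nat \<Rightarrow> nat \<Rightarrow> (nat \<Rightarrow> nat set \<Rightarrow> real) \<Rightarrow> real" where
  "opt_welfare n m f = Max (welfare n m f ` assignments n m)"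

(* A deterministic online algorithm: given the number of bidders n, the index t
   of the arriving item and the value oracles, it outputs Some j (assign to bidder j)
   or None (discard).  Outputs Some j with j >= n count as discarding. *)
type_synonym online_alg = "nat \<Rightarrow> nat \<Rightarrow> (nat \<Rightarrow> nat set \<Rightarrow> real) \<Rightarrow> nat option"

(* Since the algorithm is deterministic, the adaptive adversary is captured by
   letting the instance be chosen after the algorithm. *)
definition online :: "online_alg \<Rightarrow> bool" where
  "online alg \<longleftrightarrow>
     (\<forall>n t f g. (\<forall>j<n. \<forall>S. S \<subseteq> {..t} \<longrightarrow> f j S = g j S) \<longrightarrow> alg n t f = alg n t g)"

definition alg_welfare :: "online_alg \<Rightarrow> nat \<Rightarrow> nat \<Rightarrow> (nat \<Rightarrow> nat set \<Rightarrow> real) \<Rightarrow> real" where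
  "alg_welfare alg n m f = welfare n m f (\<lambda>t. alg n t f)"

definition competitive :: "online_alg \<Rightarrow> real \<Rightarrow> bool" where
  "competitive alg \<alpha> \<longleftrightarrow>
     (\<forall>n m f. valid_instance n m f \<longrightarrow> alg_welfare alg n m f \<ge> \<alpha> * opt_welfare n m f)"

end

theory Submission
  imports Defs
begin

definition ff :: "real \<Rightarrow> nat \<Rightarrow> nat set \<Rightarrow> real" where
  "ff d j S = (if 0 \<in> S \<and> 1 \<notin> S then d else if 1 \<in> S \<and> 0 \<notin> S then 1 else 0)"

lemma ff_valid: "d \<ge> 0 \<Longrightarrow> valid_instance 1 m (ff d)"
  unfolding valid_instance_def submodular_on_def nonneg_on_def ff_def
  by auto

lemma opt_ge: "a \<in> assignments n m \<Longrightarrow> welfare n m f a \<le> opt_welfare n m f"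
  unfolding opt_welfare_def assignments_def
  by (rule Max_ge) (auto intro!: finite_PiE)

lemma w1: "welfare 1 m f a = f 0 {i. i < m \<and> a i = Some 0}"
  unfolding welfare_def by simp

theorem theorem2:
  fixes M :: real
  assumes "M > 0"
  shows "\<forall>alg \<alpha>. online alg \<and> \<alpha> > 1 / M \<longrightarrow> \<not> competitive alg \<alpha>"
proof (intro allI impI notI)
  fix alg \<alpha>
  assume h: "online alg \<and> \<alpha> > 1 / M" and c: "competitive alg \<alpha>"
  have ap: "\<alpha> > 0" using h assms by (meson less_trans zero_less_divide_1_iff)
  define d where "d = \<alpha> / 2"
  have d0: "d > 0" "d < \<alpha>" using ap by (auto simp: d_def)
  let ?f = "ff d"
  show False
  proof (cases "alg 1 0 ?f = Some 0")
    case False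
    have s: "{i. i < (1::nat) \<and> alg 1 i ?f = Some 0} = {}" using False by auto
    have aw: "alg_welfare alg 1 1 ?f = 0"
      unfolding alg_welfare_def w1 s by (simp add: ff_def)
    let ?a = "\<lambda>i::nat. if i < 1 then Some (0::nat) else undefined"
    have "?a \<in> assignments 1 1" unfolding assignments_def by (auto split: if_splits)
    from opt_ge[OF this, of ?f] have "d \<le> opt_welfare 1 1 ?f"
      unfolding w1 by (simp add: ff_def)
    moreover have "alg_welfare alg 1 1 ?f \<ge> \<alpha> * opt_welfare 1 1 ?f"
      using c ff_valid[of d] d0 unfolding competitive_def by auto
    ultimately show False using aw ap d0
      by (smt (verit) mult_pos_pos)
  next
    case True
    let ?a = "\<lambda>i::nat. if i = 1 then Some (0::nat) else if i < 2 then None else undefined"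
    have "?a \<in> assignments 1 2" unfolding assignments_def by (auto split: if_splits)
    from opt_ge[OF this, of ?f] have "1 \<le> opt_welfare 1 2 ?f"
      unfolding w1 by (simp add: ff_def)
    moreover have "alg_welfare alg 1 2 ?f \<ge> \<alpha> * opt_welfare 1 2 ?f"
      using c ff_valid[of d] d0 unfolding competitive_def by auto
    moreover have "alg_welfare alg 1 2 ?f \<le> d"
    proof (cases "alg 1 1 ?f = Some 0")
      case True2: True
      have "{i. i < (2::nat) \<and> alg 1 i ?f = Some 0} = {0,1}"
        using True True2 by (auto simp: less_2_cases_iff)
      then show ?thesis unfolding alg_welfare_def w1 using d0 by (simp add: ff_def)
    next
      case False2: False
      have "{i. i < (2::nat) \<and> alg 1 i ?f = Some 0} = {0}"
        using True False2 by (auto simp: less_2_cases_iff)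
      then show ?thesis unfolding alg_welfare_def w1 using d0 by (simp add: ff_def)
    qed
    moreover have "\<alpha> * 1 \<le> \<alpha> * opt_welfare 1 2 ?f"
      using calculation(1) ap by (intro mult_left_mono) auto
    ultimately show False using ap d0 by linarith
  qed
qed

end
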